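(* Let $\Gamma^{-1}$ be an irreducible $n\times n$ $M$-matrix (the inverse of a strictly positive definite matrix $\Gamma$), and suppose that $(\Gamma^{-1})_{i,j}=0$ for some $i\neq j$. Let $k=\min\{l>1: (\Gamma^{-l})_{i,j}\neq0\}$, where $\Gamma^{-l}=(\Gamma^{-1})^l$. Then $k\le n-1$ and $(\Gamma^{-k})_{i,j}=(-1)^k\,|(\Gamma^{-k})_{i,j}|$.
   Context: A non-singular matrix $A$ is an $M$-matrix if all entries of $A^{-1}$ are non-negative and $A_{i,j}\le0$ for $i\ne j$. A symmetric matrix is irreducible if it is not a direct sum of square matrices. *)

theory Defs
  imports "HOL-Analysis.Analysis"
begin

text \<open>Matrix power w.r.t. matrix multiplication (the type-class power on real^'n^'n
  is componentwise, so we define the genuine matrix power).\<close>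
definition matpow :: "real^'n^'n \<Rightarrow> nat \<Rightarrow> real^'n^'n" where
  "matpow A l = (((**) A) ^^ l) (mat 1)"

definition M_matrix :: "real^'n^'n \<Rightarrow> bool" where
  "M_matrix A \<longleftrightarrow> invertible A \<and> (\<forall>i j. matrix_inv A $ i $ j \<ge> 0)
     \<and> (\<forall>i j. i \<noteq> j \<longrightarrow> A $ i $ j \<le> 0)"

text \<open>Irreducible: not (up to simultaneous permutation of rows and columns) a direct sum
  of square matrices, i.e. no proper nonempty index set S decouples from its complement.\<close>
definition irreducible_mat :: "real^'n^'n \<Rightarrow> bool" where
  "irreducible_mat A \<longleftrightarrow> \<not> (\<exists>S. S \<noteq> {} \<and> S \<noteq> UNIV \<and>
     (\<forall>i\<in>S. \<forall>j. j \<notin> S \<longrightarrow> A $ i $ j = 0 \<and> A $ j $ i = 0))"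

end

theory Submission
  imports Defs
begin

lemma matpow_Suc_right: "matpow A (Suc l) = matpow A l ** A"
proof (induction l)
  case 0 show ?case by (simp add: matpow_def)
next
  case (Suc l)
  have "matpow A (Suc (Suc l)) = A ** matpow A (Suc l)" by (simp add: matpow_def)
  also have "\<dots> = (A ** matpow A l) ** A" using Suc by (simp add: matrix_mul_assoc)
  also have "A ** matpow A l = matpow A (Suc l)" by (simp add: matpow_def)
  finally show ?case .
qed

lemma hlp1: "0 < (x::real) \<Longrightarrow> y \<le> 0 \<Longrightarrow> 0 \<le> x * (- y)"
  by (simp add: mult_nonneg_nonpos)
lemma hlp2: "0 < (x::real) \<Longrightarrow> y < 0 \<Longrightarrow> 0 < x * (- y)"
  by (simp add: mult_pos_neg)

lemma matpow_0: "matpow A 0 = mat 1" by (simp add: matpow_def)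

lemma sym_inv:
  fixes G :: "real^'n^'n"
  assumes sym: "transpose G = G"
    and posdef: "\<And>x. x \<noteq> 0 \<Longrightarrow> x \<bullet> (G *v x) > 0"
  shows "transpose (matrix_inv G) = matrix_inv G"
proof -
  have "\<forall>x. G *v x = 0 \<longrightarrow> x = 0"
    using posdef by (metis inner_zero_right less_irrefl)
  then have "invertible G" using matrix_left_invertible_ker invertible_left_inverse by blast
  then have inv: "G ** matrix_inv G = mat 1 \<and> matrix_inv G ** G = mat 1"
    unfolding invertible_def matrix_inv_def by (rule someI_ex)
  let ?B = "matrix_inv G"
  have "transpose (?B ** G) = mat 1" using inv by (simp add: transpose_mat)
  then have t: "G ** transpose ?B = mat 1" using sym by (simp add: matrix_transpose_mul)
  have "transpose ?B = (?B ** G) ** transpose ?B" using inv by simp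
  also have "\<dots> = ?B" by (simp add: matrix_mul_assoc[symmetric] t)
  finally show ?thesis .
qed

theorem lemma2p2:
  fixes G :: "real^'n^'n" and i j :: 'n
  assumes sym: "transpose G = G"
    and posdef: "\<And>x. x \<noteq> 0 \<Longrightarrow> x \<bullet> (G *v x) > 0"
    and M: "M_matrix (matrix_inv G)"
    and irr: "irreducible_mat (matrix_inv G)"
    and ij: "i \<noteq> j"
    and zero: "matrix_inv G $ i $ j = 0"
  shows "\<exists>k. 1 < k \<and> matpow (matrix_inv G) k $ i $ j \<noteq> 0
            \<and> (\<forall>l. 1 < l \<and> l < k \<longrightarrow> matpow (matrix_inv G) l $ i $ j = 0)
            \<and> k \<le> CARD('n) - 1
            \<and> matpow (matrix_inv G) k $ i $ j = (-1) ^ k * \<bar>matpow (matrix_inv G) k $ i $ j\<bar>"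
proof -
  define A where "A = matrix_inv G"
  have symA: "\<And>a b. A $ a $ b = A $ b $ a"
    using sym_inv[OF sym posdef] unfolding A_def by (metis transpose_def vec_lambda_beta)
  have offd: "\<And>a b. a \<noteq> b \<Longrightarrow> A $ a $ b \<le> 0" using M unfolding M_matrix_def A_def by blast
  define R :: "nat \<Rightarrow> 'n set" where
    "R = rec_nat {i} (\<lambda>_ S. S \<union> {b. \<exists>a\<in>S. A $ a $ b \<noteq> 0})"
  have R0: "R 0 = {i}" by (simp add: R_def)
  have RS: "\<And>l. R (Suc l) = R l \<union> {b. \<exists>a\<in>R l. A $ a $ b \<noteq> 0}" by (simp add: R_def)
  have mono: "\<And>l m. l \<le> m \<Longrightarrow> R l \<subseteq> R m"
    by (rule lift_Suc_mono_le[of R]) (auto simp: RS)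
  define P :: "'n \<Rightarrow> 'n \<Rightarrow> nat \<Rightarrow> real" where "P a b l = matpow A l $ a $ b" for a b l
  have PS: "P i b (Suc l) = (\<Sum>c\<in>UNIV. P i c l * A $ c $ b)" for b l
    by (simp add: P_def matpow_Suc_right matrix_matrix_mult_def)
  have zeroR: "b \<notin> R l \<Longrightarrow> P i b l = 0" for b l
  proof (induction l arbitrary: b)
    case 0 then show ?case by (simp add: R0 P_def matpow_0 mat_def)
  next
    case (Suc l)
    have "P i c l * A $ c $ b = 0" for c
    proof (cases "c \<in> R l")
      case True then have "A $ c $ b = 0" using Suc.prems RS by blast
      then show ?thesis by simp
    next
      case False then show ?thesis using Suc.IH by simp
    qed
    then show ?case by (simp add: PS sum.neutral)
  qed
  define Rp where "Rp l = (case l of 0 \<Rightarrow> {} | Suc m \<Rightarrow> R m)" for l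
  have signR: "b \<in> R l \<Longrightarrow> b \<notin> Rp l \<Longrightarrow> (-1)^l * P i b l > 0" for b l
  proof (induction l arbitrary: b)
    case 0 then show ?case by (simp add: R0 P_def matpow_0 mat_def)
  next
    case (Suc l)
    have bn: "b \<notin> R l" using Suc.prems by (simp add: Rp_def)
    then obtain c0 where c0: "c0 \<in> R l" "A $ c0 $ b \<noteq> 0" using Suc.prems RS by blast
    have c0n: "c0 \<notin> Rp l"
    proof
      assume "c0 \<in> Rp l"
      then obtain m where "l = Suc m" "c0 \<in> R m" by (cases l) (auto simp: Rp_def)
      then show False using bn c0 RS by blast
    qed
    define t where "t c = (-1)^(Suc l) * (P i c l * A $ c $ b)" for c
    have tnn: "t c \<ge> 0" for c
    proof (cases "c \<in> R l \<and> c \<notin> Rp l")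
      case True
      then have "(-1)^l * P i c l > 0" using Suc.IH by blast
      moreover have "c \<noteq> b" using True bn by blast
      then have "A $ c $ b \<le> 0" using offd by blast
      ultimately have "((-1)^l * P i c l) * (- A $ c $ b) \<ge> 0" by (rule hlp1)
      then show ?thesis by (simp add: t_def algebra_simps)
    next
      case False
      show ?thesis
      proof (cases "c \<in> R l")
        case True
        then obtain m where m: "l = Suc m" "c \<in> R m" using False by (cases l) (auto simp: Rp_def)
        then have "A $ c $ b = 0" using bn RS by blast
        then show ?thesis by (simp add: t_def)
      next
        case False
        then show ?thesis using zeroR by (simp add: t_def)
      qed
    qed
    have "(-1)^l * P i c0 l > 0" using Suc.IH c0 c0n by blast
    moreover have "A $ c0 $ b < 0" using offd c0 bn by (metis order_le_less)
    ultimately have "((-1)^l * P i c0 l) * (- A $ c0 $ b) > 0" by (rule hlp2)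
    then have "t c0 > 0" by (simp add: t_def algebra_simps)
    then have "sum t UNIV > 0" using tnn by (intro sum_pos2[of UNIV c0]) auto
    then show ?case by (simp add: t_def PS sum_distrib_left)
  qed
  define S where "S = {b. \<exists>l. b \<in> R l}"
  have "i \<in> S" using R0 S_def by auto
  have Sclosed: "a \<in> S \<Longrightarrow> A $ a $ b \<noteq> 0 \<Longrightarrow> b \<in> S" for a b
    unfolding S_def using RS by blast
  have "S = UNIV"
  proof (rule ccontr)
    assume "S \<noteq> UNIV"
    moreover have "\<forall>a\<in>S. \<forall>b. b \<notin> S \<longrightarrow> A $ a $ b = 0 \<and> A $ b $ a = 0"
      using Sclosed symA by metis
    ultimately show False using irr \<open>i \<in> S\<close> unfolding irreducible_mat_def A_def by blast
  qed
  then have "\<exists>l. j \<in> R l" unfolding S_def by blast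
  define d where "d = (LEAST l. j \<in> R l)"
  have jd: "j \<in> R d" unfolding d_def by (rule LeastI_ex) fact
  have jl: "l < d \<Longrightarrow> j \<notin> R l" for l unfolding d_def using not_less_Least by blast
  have "j \<notin> Rp d" using jl by (cases d) (auto simp: Rp_def)
  then have pos: "(-1)^d * P i j d > 0" using signR jd by blast
  have "d \<noteq> 0" using jd ij R0 by (cases d) auto
  moreover have "d \<noteq> 1"
  proof
    assume "d = 1"
    then have "j \<in> R (Suc 0)" using jd by simp
    then show False using R0 RS ij zero unfolding A_def by auto
  qed
  ultimately have d2: "1 < d" by linarith
  have stable: "R (Suc l) = R l \<Longrightarrow> R (l + m) = R l" for l m
    by (induction m) (auto simp: RS)
  have strict: "l < d \<Longrightarrow> R l \<subset> R (Suc l)" for l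
  proof -
    assume ld: "l < d"
    have "R l \<subseteq> R (Suc l)" by (simp add: RS)
    moreover have "R (Suc l) \<noteq> R l"
    proof
      assume "R (Suc l) = R l"
      then have "R (l + (d - l)) = R l" by (rule stable)
      then show False using jd jl[OF ld] ld by simp
    qed
    ultimately show ?thesis by blast
  qed
  have cardR: "l \<le> d \<Longrightarrow> card (R l) \<ge> Suc l" for l
  proof (induction l)
    case 0 then show ?case by (simp add: R0)
  next
    case (Suc l)
    then have "card (R l) < card (R (Suc l))" using strict by (intro psubset_card_mono) auto
    then show ?case using Suc by simp
  qed
  have "card (R d) \<le> CARD('n)" by (rule card_mono) auto
  with cardR[of d] have dle: "d \<le> CARD('n) - 1" by simp
  have "P i j d \<noteq> 0" using pos by auto
  moreover have "\<forall>l. 1 < l \<and> l < d \<longrightarrow> P i j l = 0" using jl zeroR by blast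
  moreover have "P i j d = (-1)^d * \<bar>P i j d\<bar>"
  proof -
    have sq: "((-1::real)^d) * (-1)^d = 1" by (simp add: power_mult_distrib[symmetric])
    have "\<bar>P i j d\<bar> = \<bar>(-1)^d * P i j d\<bar>" by (simp add: abs_mult)
    also have "\<dots> = (-1)^d * P i j d" using pos by simp
    finally have "(-1)^d * \<bar>P i j d\<bar> = ((-1)^d * (-1)^d) * P i j d" by simp
    then show ?thesis using sq by simp
  qed
  ultimately show ?thesis using d2 dle unfolding P_def A_def by blast
qed

end
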